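(* For every $n\in\{2,6,10,\dots\}$, the greedy local search procedure applied to $g_n$ starting from the zero vector has no ties at any step (so its path is uniquely determined), it terminates at the unique local maximum of $g_n$, namely the complement of the characteristic vector of the set $\{4,8,\dots,n-2\}$ (i.e. the vector with $x_i=0$ for $i\in\{4,8,\dots,n-2\}$ and $x_i=1$ otherwise), and the path has length greater than $2^{n/4}$. In particular greedy local search takes exponentially many steps, both in $n$ and in the size of $g_n$.
   Context: For $n\in\{2,6,10,\dots\}$ define polynomials $g_n$ in variables $x_1,\dots,x_n$ (evaluated on $\{0,1\}^n$) recursively: $g_2(x_1,x_2):=2x_1+x_2$, and, with $\mathbf{x}=(x_1,\dots,x_n)$ and $M_n:=4\big(\max_{\{0,1\}^n} g_n-\min_{\{0,1\}^n} g_n\big)$, $g_{n+4}(\mathbf{x},x_{n+1},x_{n+2},x_{n+3},x_{n+4}) := 4g_n(\mathbf{x}) + 3x_{n+1} - \sum_{i=1}^n (2M_n+i+2)x_i x_{n+2} + 3M_n n\, x_{n+1}x_{n+2} + 2x_{n+3} + M_n x_{n+1}x_{n+3} - 4M_n n\, x_{n+2}x_{n+4} + 5M_n n\, x_{n+3}x_{n+4}$. Greedy local search on $f:\{0,1\}^m\to\mathbb{R}$: starting from a vertex, at each step, if some neighbor (vertex differing in exactly one coordinate) has strictly larger value, move to a neighbor with the largest value among all neighbors; otherwise stop (the current vertex is a local maximum). A tie occurs if two distinct neighbors attain this largest value. The length of the path is the number of moves. *)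

theory Defs
  imports Complex_Main
begin

text \<open>A vertex of the cube {0,1}^m is represented by the set S \<subseteq> {1..m} of its
  coordinates equal to 1; the coordinate x_i is xv S i.\<close>

definition xv :: "nat set \<Rightarrow> nat \<Rightarrow> int" where
  "xv S i = (if i \<in> S then 1 else 0)"

text \<open>gk k is g_n for n = 4k+2; it only depends on the coordinates 1..n.\<close>

primrec gk :: "nat \<Rightarrow> nat set \<Rightarrow> int" where
  "gk 0 S = 2 * xv S 1 + xv S 2"
| "gk (Suc k) S =
     (let n = 4 * k + 2;
          M = 4 * (Max (gk k ` Pow {1..n}) - Min (gk k ` Pow {1..n}));
          x = xv S
      in 4 * gk k S + 3 * x (n+1)
         - (\<Sum>i=1..n. (2 * M + int i + 2) * x i * x (n+2))
         + 3 * M * int n * x (n+1) * x (n+2)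
         + 2 * x (n+3) + M * x (n+1) * x (n+3)
         - 4 * M * int n * x (n+2) * x (n+4)
         + 5 * M * int n * x (n+3) * x (n+4))"

definition g :: "nat \<Rightarrow> nat set \<Rightarrow> int" where
  "g n = gk ((n - 2) div 4)"

definition nbrs :: "nat \<Rightarrow> nat set \<Rightarrow> nat set set" where
  "nbrs m S = (\<lambda>i. if i \<in> S then S - {i} else insert i S) ` {1..m}"

definition local_max :: "nat \<Rightarrow> (nat set \<Rightarrow> int) \<Rightarrow> nat set \<Rightarrow> bool" where
  "local_max m f S \<longleftrightarrow> (\<forall>T \<in> nbrs m S. f T \<le> f S)"

definition greedy_move_no_tie :: "nat \<Rightarrow> (nat set \<Rightarrow> int) \<Rightarrow> nat set \<Rightarrow> nat set \<Rightarrow> bool" where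
  "greedy_move_no_tie m f S T \<longleftrightarrow>
     T \<in> nbrs m S \<and> f S < f T \<and> (\<forall>U \<in> nbrs m S. U \<noteq> T \<longrightarrow> f U < f T)"

text \<open>Its length (number of moves) is length ps - 1.\<close>
definition greedy_path_no_ties :: "nat \<Rightarrow> (nat set \<Rightarrow> int) \<Rightarrow> nat set list \<Rightarrow> bool" where
  "greedy_path_no_ties m f ps \<longleftrightarrow> ps \<noteq> [] \<and>
     (\<forall>j < length ps - 1. greedy_move_no_tie m f (ps ! j) (ps ! Suc j)) \<and>
     local_max m f (last ps)"

end

theory Submission
  imports Defs
begin

definition flip :: "nat \<Rightarrow> nat set \<Rightarrow> nat set" where
  "flip i S = (if i \<in> S then S - {i} else insert i S)"

lemma nbrs_flip: "nbrs m S = (\<lambda>i. flip i S) ` {1..m}"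
  by (simp add: nbrs_def flip_def)

lemma local_max_iff: "local_max m f S \<longleftrightarrow> (\<forall>j\<in>{1..m}. f (flip j S) \<le> f S)"
  unfolding local_max_def nbrs_flip by auto

fun run :: "nat \<Rightarrow> (nat set \<Rightarrow> int) \<Rightarrow> nat set \<Rightarrow> nat list \<Rightarrow> nat set \<Rightarrow> bool" where
  "run m f S [] T = (S = T)"
| "run m f S (j#js) T = (j \<in> {1..m} \<and> f S < f (flip j S) \<and>
     (\<forall>j'\<in>{1..m}. j' \<noteq> j \<longrightarrow> f (flip j' S) < f (flip j S)) \<and> run m f (flip j S) js T)"

lemma run_append: "run m f S (xs @ ys) U \<longleftrightarrow> (\<exists>T. run m f S xs T \<and> run m f T ys U)"
  by (induction xs arbitrary: S) auto

lemma run_mono: "run m f S js T \<Longrightarrow> f S \<le> f T"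
  by (induction js arbitrary: S) force+

lemma run_to_path:
  assumes "run m f S js T" "local_max m f T"
  shows "\<exists>ps. greedy_path_no_ties m f ps \<and> hd ps = S \<and> last ps = T \<and> length ps = Suc (length js)"
  using assms
proof (induction js arbitrary: S)
  case Nil
  then show ?case by (intro exI[of _ "[S]"]) (auto simp: greedy_path_no_ties_def)
next
  case (Cons j js)
  then obtain ps where ps: "greedy_path_no_ties m f ps" "hd ps = flip j S" "last ps = T"
    "length ps = Suc (length js)" by auto
  have mv: "greedy_move_no_tie m f S (flip j S)"
    using Cons.prems unfolding greedy_move_no_tie_def nbrs_flip by auto
  have ne: "ps \<noteq> []" using ps by auto
  show ?case
  proof (intro exI[of _ "S # ps"] conjI)
    show "greedy_path_no_ties m f (S # ps)"
      unfolding greedy_path_no_ties_def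
    proof (intro conjI allI impI)
      fix i assume i: "i < length (S # ps) - 1"
      show "greedy_move_no_tie m f ((S # ps) ! i) ((S # ps) ! Suc i)"
      proof (cases i)
        case 0 then show ?thesis using mv ps(2) ne by (simp add: hd_conv_nth)
      next
        case (Suc i') then show ?thesis using ps(1) i unfolding greedy_path_no_ties_def by auto
      qed
    qed (use ps ne in \<open>auto simp: greedy_path_no_ties_def\<close>)
  qed (use ps ne in auto)
qed

lemma run_lift:
  assumes "run n f S js T" "S \<subseteq> {1..n}" "n \<le> m"
    "E \<inter> {1..n} = {}"
    "\<And>U. U \<subseteq> {1..n} \<Longrightarrow> F (U \<union> E) = c * f U + d"
    "c > 0"
    "\<And>U j. U \<subseteq> {1..n} \<Longrightarrow> j \<in> {n<..m} \<Longrightarrow> F (flip j (U \<union> E)) < F (U \<union> E) + c"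
  shows "run m F (S \<union> E) js (T \<union> E)"
  using assms(1,2)
proof (induction js arbitrary: S)
  case Nil then show ?case by simp
next
  case (Cons j js)
  have j: "j \<in> {1..n}" and inc: "f S < f (flip j S)"
    and oth: "\<And>j'. j' \<in> {1..n} \<Longrightarrow> j' \<noteq> j \<Longrightarrow> f (flip j' S) < f (flip j S)"
    and r: "run n f (flip j S) js T" using Cons.prems by auto
  have fl: "\<And>i. i \<in> {1..n} \<Longrightarrow> flip i (S \<union> E) = flip i S \<union> E"
    using assms(4) by (auto simp: flip_def)
  have sub: "\<And>i. i \<in> {1..n} \<Longrightarrow> flip i S \<subseteq> {1..n}"
    using Cons.prems(2) by (auto simp: flip_def)
  have IH: "run m F (flip j S \<union> E) js (T \<union> E)" using Cons.IH[OF r sub[OF j]] .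
  have v: "\<And>i. i \<in> {1..n} \<Longrightarrow> F (flip i (S \<union> E)) = c * f (flip i S) + d"
    using fl sub assms(5) by simp
  have vS: "F (S \<union> E) = c * f S + d" using assms(5) Cons.prems(2) by simp
  have inc2: "F (S \<union> E) + c \<le> F (flip j (S \<union> E))"
  proof -
    have "c * (f S + 1) \<le> c * f (flip j S)" using inc assms(6) by (intro mult_left_mono) auto
    then show ?thesis using v[OF j] vS by (simp add: algebra_simps)
  qed
  show ?case
  proof (simp only: run.simps, intro conjI ballI impI)
    show "j \<in> {1..m}" using j assms(3) by auto
    show "F (S \<union> E) < F (flip j (S \<union> E))" using inc2 assms(6) by simp
    show "run m F (flip j (S \<union> E)) js (T \<union> E)" using IH fl[OF j] by simp
  next
    fix j' assume j': "j' \<in> {1..m}" "j' \<noteq> j"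
    show "F (flip j' (S \<union> E)) < F (flip j (S \<union> E))"
    proof (cases "j' \<le> n")
      case True
      then have j'n: "j' \<in> {1..n}" using j' by auto
      show ?thesis using v[OF j'n] v[OF j] oth[OF j'n j'(2)] assms(6) by simp
    next
      case False
      then have "F (flip j' (S \<union> E)) < F (S \<union> E) + c" using assms(7)[OF Cons.prems(2)] j' by auto
      then show ?thesis using inc2 by simp
    qed
  qed
qed


definition nn :: "nat \<Rightarrow> nat" where "nn k = 4*k+2"
definition MM :: "nat \<Rightarrow> int" where
  "MM k = 4 * (Max (gk k ` Pow {1..nn k}) - Min (gk k ` Pow {1..nn k}))"
definition WW :: "nat \<Rightarrow> nat set \<Rightarrow> int" where
  "WW k U = (\<Sum>i\<in>U. 2 * MM k + int i + 2)"
definition Ext :: "nat \<Rightarrow> bool \<Rightarrow> bool \<Rightarrow> bool \<Rightarrow> bool \<Rightarrow> nat set" where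
  "Ext n b1 b2 b3 b4 = {i. (b1 \<and> i = n+1) \<or> (b2 \<and> i = n+2) \<or> (b3 \<and> i = n+3) \<or> (b4 \<and> i = n+4)}"
definition Tset :: "nat \<Rightarrow> nat set" where
  "Tset k = {1..nn k} - {i. 4 \<le> i \<and> i \<le> nn k - 2 \<and> 4 dvd i}"

lemma nn_Suc: "nn (Suc k) = nn k + 4" by (simp add: nn_def)

lemma gk_cong: "(\<forall>i\<in>{1..nn k}. (i \<in> S) = (i \<in> S')) \<Longrightarrow> gk k S = gk k S'"
proof (induction k arbitrary: S S')
  case 0
  then show ?case by (simp add: nn_def xv_def)
next
  case (Suc k)
  have x: "\<And>i. i \<in> {1..nn k + 4} \<Longrightarrow> xv S i = xv S' i"
    using Suc.prems by (auto simp: xv_def nn_Suc)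
  have g: "gk k S = gk k S'" using Suc.prems by (intro Suc.IH) (auto simp: nn_Suc)
  have s: "(\<Sum>i=1..nn k. (2 * MM k + int i + 2) * xv S i * xv S (nn k + 2))
         = (\<Sum>i=1..nn k. (2 * MM k + int i + 2) * xv S' i * xv S' (nn k + 2))"
    by (intro sum.cong refl) (simp add: x)
  show ?case using g s x[of "nn k + 1"] x[of "nn k + 2"] x[of "nn k + 3"] x[of "nn k + 4"]
    by (simp add: Let_def nn_def MM_def)
qed

lemma gk_Suc: "gk (Suc k) S = 4 * gk k S + 3 * xv S (nn k+1)
         - (\<Sum>i=1..nn k. (2 * MM k + int i + 2) * xv S i * xv S (nn k+2))
         + 3 * MM k * int (nn k) * xv S (nn k+1) * xv S (nn k+2)
         + 2 * xv S (nn k+3) + MM k * xv S (nn k+1) * xv S (nn k+3)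
         - 4 * MM k * int (nn k) * xv S (nn k+2) * xv S (nn k+4)
         + 5 * MM k * int (nn k) * xv S (nn k+3) * xv S (nn k+4)"
  unfolding gk.simps Let_def nn_def MM_def ..

declare gk.simps[simp del]

lemma gk_Ext: "gk k (U \<union> Ext (nn k) b1 b2 b3 b4) = gk k U"
  by (rule gk_cong) (auto simp: Ext_def)

lemma sum_xv: "U \<subseteq> {1..n} \<Longrightarrow> (\<Sum>i=1..n. a i * xv U i) = (\<Sum>i\<in>U. a i)"
proof -
  assume U: "U \<subseteq> {1..n}"
  have "(\<Sum>i=1..n. a i * xv U i) = (\<Sum>i=1..n. if i \<in> U then a i else 0)"
    by (intro sum.cong) (auto simp: xv_def)
  also have "\<dots> = sum a ({1..n} \<inter> U)" by (simp add: sum.inter_restrict)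
  also have "{1..n} \<inter> U = U" using U by auto
  finally show ?thesis .
qed

lemma gSuc_Ext:
  assumes U: "U \<subseteq> {1..nn k}"
  shows "gk (Suc k) (U \<union> Ext (nn k) b1 b2 b3 b4) =
    4 * gk k U + 3 * of_bool b1 - of_bool b2 * WW k U
    + 3 * (MM k * int (nn k)) * of_bool b1 * of_bool b2
    + 2 * of_bool b3 + MM k * of_bool b1 * of_bool b3
    - 4 * (MM k * int (nn k)) * of_bool b2 * of_bool b4
    + 5 * (MM k * int (nn k)) * of_bool b3 * of_bool b4"
proof -
  let ?S = "U \<union> Ext (nn k) b1 b2 b3 b4"
  have x: "\<And>j. j \<in> {1..4} \<Longrightarrow> xv ?S (nn k + j) = of_bool ((b1 \<and> j = 1) \<or> (b2 \<and> j = 2) \<or> (b3 \<and> j = 3) \<or> (b4 \<and> j = 4))"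
    using U by (auto simp: xv_def Ext_def)
  have x1: "xv ?S (nn k + 1) = of_bool b1" using x[of 1] by simp
  have x2: "xv ?S (nn k + 2) = of_bool b2" using x[of 2] by simp
  have x3: "xv ?S (nn k + 3) = of_bool b3" using x[of 3] by simp
  have x4: "xv ?S (nn k + 4) = of_bool b4" using x[of 4] by simp
  have xU: "\<And>i. i \<in> {1..nn k} \<Longrightarrow> xv ?S i = xv U i" by (auto simp: xv_def Ext_def)
  have s: "(\<Sum>i=1..nn k. (2 * MM k + int i + 2) * xv ?S i * xv ?S (nn k + 2))
       = of_bool b2 * WW k U"
  proof -
    have "(\<Sum>i=1..nn k. (2 * MM k + int i + 2) * xv ?S i * xv ?S (nn k + 2))
        = (\<Sum>i=1..nn k. (2 * MM k + int i + 2) * xv U i * of_bool b2)"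
      by (intro sum.cong refl) (simp only: x2 xU)
    also have "\<dots> = (\<Sum>i=1..nn k. (2 * MM k + int i + 2) * xv U i) * of_bool b2"
      by (simp add: sum_distrib_right)
    also have "\<dots> = of_bool b2 * WW k U" using sum_xv[OF U] by (simp add: WW_def)
    finally show ?thesis .
  qed
  have "gk (Suc k) ?S = 4 * gk k ?S + 3 * xv ?S (nn k+1)
         - (\<Sum>i=1..nn k. (2 * MM k + int i + 2) * xv ?S i * xv ?S (nn k+2))
         + 3 * MM k * int (nn k) * xv ?S (nn k+1) * xv ?S (nn k+2)
         + 2 * xv ?S (nn k+3) + MM k * xv ?S (nn k+1) * xv ?S (nn k+3)
         - 4 * MM k * int (nn k) * xv ?S (nn k+2) * xv ?S (nn k+4)
         + 5 * MM k * int (nn k) * xv ?S (nn k+3) * xv ?S (nn k+4)"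
    by (rule gk_Suc)
  also have "\<dots> = 4 * gk k ?S + 3 * xv ?S (nn k+1) - of_bool b2 * WW k U
         + 3 * MM k * int (nn k) * xv ?S (nn k+1) * xv ?S (nn k+2)
         + 2 * xv ?S (nn k+3) + MM k * xv ?S (nn k+1) * xv ?S (nn k+3)
         - 4 * MM k * int (nn k) * xv ?S (nn k+2) * xv ?S (nn k+4)
         + 5 * MM k * int (nn k) * xv ?S (nn k+3) * xv ?S (nn k+4)" unfolding s ..
  finally show ?thesis unfolding x1 x2 x3 x4 gk_Ext by (simp only: mult.assoc)
qed

lemma flip_Ext_low: "j \<in> {1..n} \<Longrightarrow> flip j (U \<union> Ext n b1 b2 b3 b4) = flip j U \<union> Ext n b1 b2 b3 b4"
  by (auto simp: flip_def Ext_def)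
lemma flip_Ext1: "U \<subseteq> {1..n} \<Longrightarrow> flip (n+1) (U \<union> Ext n b1 b2 b3 b4) = U \<union> Ext n (\<not>b1) b2 b3 b4"
  by (auto simp: flip_def Ext_def)
lemma flip_Ext2: "U \<subseteq> {1..n} \<Longrightarrow> flip (n+2) (U \<union> Ext n b1 b2 b3 b4) = U \<union> Ext n b1 (\<not>b2) b3 b4"
  by (auto simp: flip_def Ext_def)
lemma flip_Ext3: "U \<subseteq> {1..n} \<Longrightarrow> flip (n+3) (U \<union> Ext n b1 b2 b3 b4) = U \<union> Ext n b1 b2 (\<not>b3) b4"
  by (auto simp: flip_def Ext_def)
lemma flip_Ext4: "U \<subseteq> {1..n} \<Longrightarrow> flip (n+4) (U \<union> Ext n b1 b2 b3 b4) = U \<union> Ext n b1 b2 b3 (\<not>b4)"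
  by (auto simp: flip_def Ext_def)
lemma flip_sub: "j \<in> {1..n} \<Longrightarrow> U \<subseteq> {1..n} \<Longrightarrow> flip j U \<subseteq> {1..n}"
  by (auto simp: flip_def)
lemma range4: "j \<in> {1..(n::nat)+4} \<Longrightarrow> j \<in> {1..n} \<or> j = n+1 \<or> j = n+2 \<or> j = n+3 \<or> j = n+4"
  by auto

lemma WW_flip: "j \<in> {1..nn k} \<Longrightarrow> U \<subseteq> {1..nn k} \<Longrightarrow>
   WW k (flip j U) = (if j \<in> U then WW k U - (2 * MM k + int j + 2) else WW k U + (2 * MM k + int j + 2))"
proof -
  assume "j \<in> {1..nn k}" "U \<subseteq> {1..nn k}"
  then have fin: "finite U" using finite_subset by blast
  then show ?thesis by (auto simp: flip_def WW_def sum.remove)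
qed

lemma WW_bounds:
  assumes "U \<subseteq> {1..nn k}" "MM k \<ge> 0"
  shows "0 \<le> WW k U" "WW k U \<le> 2 * (MM k * int (nn k)) + int (nn k) * int (nn k) + 2 * int (nn k)"
proof -
  have fin: "finite U" using assms finite_subset by blast
  show "0 \<le> WW k U" unfolding WW_def using assms by (intro sum_nonneg) auto
  have "WW k U \<le> (\<Sum>i\<in>U. 2 * MM k + int (nn k) + 2)" unfolding WW_def
    using assms by (intro sum_mono) auto
  also have "\<dots> = int (card U) * (2 * MM k + int (nn k) + 2)" by simp
  also have "\<dots> \<le> int (nn k) * (2 * MM k + int (nn k) + 2)"
  proof -
    have "card U \<le> card {1..nn k}" using assms(1) by (intro card_mono) auto
    then have "int (card U) \<le> int (nn k)" by simp
    then show ?thesis using assms(2) by (intro mult_right_mono) auto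
  qed
  finally show "WW k U \<le> 2 * (MM k * int (nn k)) + int (nn k) * int (nn k) + 2 * int (nn k)"
    by (simp add: algebra_simps)
qed

lemma range_MM:
  assumes "U \<subseteq> {1..nn k}" "V \<subseteq> {1..nn k}"
  shows "4 * gk k U - 4 * gk k V \<le> MM k"
proof -
  have fin: "finite (gk k ` Pow {1..nn k})" by simp
  have "gk k U \<le> Max (gk k ` Pow {1..nn k})" using assms by (intro Max_ge fin) auto
  moreover have "Min (gk k ` Pow {1..nn k}) \<le> gk k V" using assms by (intro Min_le fin) auto
  ultimately show ?thesis unfolding MM_def by simp
qed


lemma Pfacts:
  fixes M n :: int
  assumes "2*n + 8 \<le> M" "2 \<le> n"
  shows "2*M \<le> M*n" "M + n*n + 2*n + 3 \<le> M*n" "n*n + 2*n < M*n" "12 \<le> M"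
proof -
  have "0 \<le> (M - 2*n - 8) * (n - 2)" using assms by simp
  then have a: "2*M + 2*(n*n) + 4*n - 16 \<le> M*n" by (simp add: algebra_simps)
  have b: "2*n \<le> n*n" using assms(2) by (intro mult_right_mono) auto
  show "2*M \<le> M*n" "M + n*n + 2*n + 3 \<le> M*n" "n*n + 2*n < M*n" "12 \<le> M"
    using a b assms by linarith+
qed

locale lvl =
  fixes k :: nat and B :: int and T :: "nat set"
  assumes MB: "4*B + 2*int(nn k) \<le> MM k" and B2: "2 \<le> B" and Tsub: "T \<subseteq> {1..nn k}"
    and Tmax: "local_max (nn k) (gk k) T"
begin

lemma n2: "2 \<le> int (nn k)" by (simp add: nn_def)
lemma M_ge: "2 * int (nn k) + 8 \<le> MM k" using MB B2 by linarith
lemmas PF = Pfacts[OF M_ge n2]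
lemma M_ge0: "0 \<le> MM k" using PF by linarith
lemmas WB = WW_bounds[OF _ M_ge0]

end

lemma WW0: "WW k {} = 0" by (simp add: WW_def)

lemmas evs = of_bool_eq not_True_eq_False not_False_eq_True mult_1_right mult_1 mult_zero_right mult_zero_left

lemma run_single: "run m f S [j] S' \<longleftrightarrow> (j \<in> {1..m} \<and> f S < f (flip j S) \<and>
     (\<forall>j'\<in>{1..m}. j' \<noteq> j \<longrightarrow> f (flip j' S) < f (flip j S)) \<and> flip j S = S')"
  by simp

lemma run_cons: "run m f S [j] S' \<Longrightarrow> run m f S' js Z \<Longrightarrow> run m f S (j#js) Z"
  using run_append[of m f S "[j]" js Z] by auto

lemma gSuc_Ext0: "gk (Suc k) (Ext (nn k) b1 b2 b3 b4) =
    4 * gk k {} + 3 * of_bool b1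
    + 3 * (MM k * int (nn k)) * of_bool b1 * of_bool b2
    + 2 * of_bool b3 + MM k * of_bool b1 * of_bool b3
    - 4 * (MM k * int (nn k)) * of_bool b2 * of_bool b4
    + 5 * (MM k * int (nn k)) * of_bool b3 * of_bool b4"
  using gSuc_Ext[of "{}" k b1 b2 b3 b4] by (simp add: WW_def)

lemma move_Ext:
  fixes F :: "nat set \<Rightarrow> int"
  assumes U: "U \<subseteq> {1..n}" and j: "j \<in> {1..n+4}"
    and S': "flip j (U \<union> Ext n b1 b2 b3 b4) = S'"
    and inc: "F (U \<union> Ext n b1 b2 b3 b4) < F S'"
    and low: "\<And>i. i \<in> {1..n} \<Longrightarrow> i \<noteq> j \<Longrightarrow> F (flip i U \<union> Ext n b1 b2 b3 b4) < F S'"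
    and e1: "n+1 \<noteq> j \<Longrightarrow> F (U \<union> Ext n (\<not>b1) b2 b3 b4) < F S'"
    and e2: "n+2 \<noteq> j \<Longrightarrow> F (U \<union> Ext n b1 (\<not>b2) b3 b4) < F S'"
    and e3: "n+3 \<noteq> j \<Longrightarrow> F (U \<union> Ext n b1 b2 (\<not>b3) b4) < F S'"
    and e4: "n+4 \<noteq> j \<Longrightarrow> F (U \<union> Ext n b1 b2 b3 (\<not>b4)) < F S'"
  shows "run (n+4) F (U \<union> Ext n b1 b2 b3 b4) [j] S'"
  unfolding run_single S'
proof (intro conjI ballI impI j inc refl)
  fix j' assume j': "j' \<in> {1..n+4}" "j' \<noteq> j"
  then consider "j' \<in> {1..n}" | "j' = n+1" | "j' = n+2" | "j' = n+3" | "j' = n+4" using range4 by blast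
  then show "F (flip j' (U \<union> Ext n b1 b2 b3 b4)) < F S'"
  proof cases
    case 1 then show ?thesis using low[OF 1 j'(2)] by (simp only: flip_Ext_low[OF 1])
  next
    case 2 then show ?thesis using e1 j'(2) by (simp only: flip_Ext1[OF U]) simp
  next
    case 3 then show ?thesis using e2 j'(2) by (simp only: flip_Ext2[OF U]) simp
  next
    case 4 then show ?thesis using e3 j'(2) by (simp only: flip_Ext3[OF U]) simp
  next
    case 5 then show ?thesis using e4 j'(2) by (simp only: flip_Ext4[OF U]) simp
  qed
qed

fun clr :: "(nat set \<Rightarrow> int) \<Rightarrow> int \<Rightarrow> nat set \<Rightarrow> nat list \<Rightarrow> nat set \<Rightarrow> bool" where
  "clr f B A [] Z = (A = Z)"
| "clr f B A (a#as) Z = (a \<in> A \<and> f A - B \<le> f (A - {a}) \<and>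
     (\<forall>j\<in>A. j \<noteq> a \<longrightarrow> f (A - {j}) \<le> f (A - {a}) \<and> 4 * f (A - {j}) + int j < 4 * f (A - {a}) + int a)
     \<and> clr f B (A - {a}) as Z)"

lemma clr_append: "clr f B A (xs @ ys) Z \<longleftrightarrow> (\<exists>Y. clr f B A xs Y \<and> clr f B Y ys Z)"
  by (induction xs arbitrary: A) auto

lemma clr_cons_intro: "a \<in> A \<Longrightarrow> f A - B \<le> f (A - {a}) \<Longrightarrow>
  (\<And>j. j \<in> A \<Longrightarrow> j \<noteq> a \<Longrightarrow> f (A - {j}) \<le> f (A - {a}) \<and> 4 * f (A - {j}) + int j < 4 * f (A - {a}) + int a)
  \<Longrightarrow> clr f B (A - {a}) as Z \<Longrightarrow> clr f B A (a#as) Z"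
  by auto

lemma range4': "j \<in> {(n::nat)<..n+4} \<Longrightarrow> j = n+1 \<or> j = n+2 \<or> j = n+3 \<or> j = n+4"
  by auto

lemma Ext_disj: "Ext n b1 b2 b3 b4 \<inter> {1..n} = {}" by (auto simp: Ext_def)

lemma minus_Ext_low: "j \<in> {1..n} \<Longrightarrow> (U \<union> Ext n b1 b2 b3 b4) - {j} = (U - {j}) \<union> Ext n b1 b2 b3 b4"
  by (auto simp: Ext_def)
lemma minus_Ext: "U \<subseteq> {1..n} \<Longrightarrow> (U \<union> Ext n True b2 b3 b4) - {n+1} = U \<union> Ext n False b2 b3 b4"
  "U \<subseteq> {1..n} \<Longrightarrow> (U \<union> Ext n b1 b2 True b4) - {n+3} = U \<union> Ext n b1 b2 False b4"
  "U \<subseteq> {1..n} \<Longrightarrow> (U \<union> Ext n b1 b2 b3 True) - {n+4} = U \<union> Ext n b1 b2 b3 False"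
  by (auto simp: Ext_def)
lemma Ext_empty: "Ext n False False False False = {}" by (auto simp: Ext_def)

context lvl begin

lemma Tl: "\<And>j. j \<in> {1..nn k} \<Longrightarrow> gk k (flip j T) \<le> gk k T" using Tmax by (simp add: local_max_iff)
lemma lowT: "\<And>j. j \<in> {1..nn k} \<Longrightarrow> flip j T \<subseteq> {1..nn k}" using flip_sub Tsub by blast

lemma phaseB: "run (nn k + 4) (gk (Suc k)) (T \<union> Ext (nn k) False False False False) [nn k + 1, nn k + 2]
   (T \<union> Ext (nn k) True True False False)"
proof (rule run_cons)
  note W = WB[OF Tsub]
  show "run (nn k + 4) (gk (Suc k)) (T \<union> Ext (nn k) False False False False) [nn k + 1]
      (T \<union> Ext (nn k) True False False False)"
    apply (rule move_Ext[OF Tsub])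
    subgoal by simp
    subgoal by (simp only: flip_Ext1[OF Tsub]) simp
    subgoal by (simp add: gSuc_Ext[OF Tsub])
    subgoal premises p for i using Tl[OF p(1)] W PF by (simp add: gSuc_Ext[OF Tsub] gSuc_Ext[OF lowT[OF p(1)]])
    using W PF by (simp_all add: gSuc_Ext[OF Tsub])
  show "run (nn k + 4) (gk (Suc k)) (T \<union> Ext (nn k) True False False False) [nn k + 2]
      (T \<union> Ext (nn k) True True False False)"
    apply (rule run_cons[OF _ run.simps(1)[THEN iffD2, OF refl]])
    apply (rule move_Ext[OF Tsub])
    subgoal by simp
    subgoal by (simp only: flip_Ext2[OF Tsub]) simp
    subgoal using W PF by (simp add: gSuc_Ext[OF Tsub])
    subgoal premises p for i using Tl[OF p(1)] W PF by (simp add: gSuc_Ext[OF Tsub] gSuc_Ext[OF lowT[OF p(1)]])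
    using W PF by (simp_all add: gSuc_Ext[OF Tsub])
qed

lemma single_facts:
  assumes i: "i \<in> {1..nn k}"
  shows "{i} \<subseteq> {1..nn k}" "WW k {i} = 2 * MM k + int i + 2" "4 * gk k {i} - 4 * gk k {} \<le> MM k" "1 \<le> int i"
  using i range_MM[of "{i}" k "{}"] by (auto simp: WW_def)

lemma phaseD: "run (nn k + 4) (gk (Suc k)) ({} \<union> Ext (nn k) True True False False) [nn k + 3, nn k + 4, nn k + 2]
   ({} \<union> Ext (nn k) True False True True)"
proof -
  have e: "{} \<subseteq> {1..nn k}" by simp
  have fe: "\<And>i. flip i {} = {i}" by (simp add: flip_def)
  have m1: "run (nn k + 4) (gk (Suc k)) ({} \<union> Ext (nn k) True True False False) [nn k + 3]
     ({} \<union> Ext (nn k) True True True False)"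
    apply (rule move_Ext[OF e])
    subgoal by simp
    subgoal by (simp only: flip_Ext3[OF e]) simp
    subgoal using PF by (simp only: gSuc_Ext[OF e] WW0 evs, linarith?)
    subgoal premises p for i using single_facts[OF p(1)] PF
      by (simp only: fe gSuc_Ext[OF single_facts(1)[OF p(1)]] gSuc_Ext[OF e] WW0 evs, linarith?)
    using PF by (simp only: gSuc_Ext[OF e] WW0 evs, linarith?)+
  have m2: "run (nn k + 4) (gk (Suc k)) ({} \<union> Ext (nn k) True True True False) [nn k + 4]
     ({} \<union> Ext (nn k) True True True True)"
    apply (rule move_Ext[OF e])
    subgoal by simp
    subgoal by (simp only: flip_Ext4[OF e]) simp
    subgoal using PF by (simp only: gSuc_Ext[OF e] WW0 evs, linarith?)
    subgoal premises p for i using single_facts[OF p(1)] PF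
      by (simp only: fe gSuc_Ext[OF single_facts(1)[OF p(1)]] gSuc_Ext[OF e] WW0 evs, linarith?)
    using PF by (simp only: gSuc_Ext[OF e] WW0 evs, linarith?)+
  have m3: "run (nn k + 4) (gk (Suc k)) ({} \<union> Ext (nn k) True True True True) [nn k + 2]
     ({} \<union> Ext (nn k) True False True True)"
    apply (rule move_Ext[OF e])
    subgoal by simp
    subgoal by (simp only: flip_Ext2[OF e]) simp
    subgoal using PF by (simp only: gSuc_Ext[OF e] WW0 evs, linarith?)
    subgoal premises p for i using single_facts[OF p(1)] PF
      by (simp only: fe gSuc_Ext[OF single_facts(1)[OF p(1)]] gSuc_Ext[OF e] WW0 evs, linarith?)
    using PF by (simp only: gSuc_Ext[OF e] WW0 evs, linarith?)+
  show ?thesis using run_cons[OF m1 run_cons[OF m2 m3]] .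
qed

lemma phaseC: "clr (gk k) B' U cl {} \<Longrightarrow> U \<subseteq> {1..nn k} \<Longrightarrow>
  run (nn k + 4) (gk (Suc k)) (U \<union> Ext (nn k) True True False False) cl ({} \<union> Ext (nn k) True True False False)"
proof (induction cl arbitrary: U)
  case Nil then show ?case by simp
next
  case (Cons a as)
  note Usub = Cons.prems(2)
  have aU: "a \<in> U" and ord: "\<And>j. j \<in> U \<Longrightarrow> j \<noteq> a \<Longrightarrow> 4 * gk k (U - {j}) + int j < 4 * gk k (U - {a}) + int a"
    and rest: "clr (gk k) B' (U - {a}) as {}" using Cons.prems(1) by auto
  have an: "a \<in> {1..nn k}" using aU Usub by auto
  have U'sub: "U - {a} \<subseteq> {1..nn k}" using Usub by auto
  have fa: "flip a U = U - {a}" using aU by (simp add: flip_def)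
  have WU': "WW k (U - {a}) = WW k U - (2 * MM k + int a + 2)" using WW_flip[OF an Usub] aU fa by simp
  have a1: "1 \<le> int a" using an by simp
  note W = WB[OF Usub] WB[OF U'sub]
  note R = range_MM[OF Usub U'sub] range_MM[OF U'sub Usub]
  note VU = gSuc_Ext[OF Usub] and VU' = gSuc_Ext[OF U'sub]
  have mv: "run (nn k + 4) (gk (Suc k)) (U \<union> Ext (nn k) True True False False) [a] ((U - {a}) \<union> Ext (nn k) True True False False)"
    apply (rule move_Ext[OF Usub])
    subgoal using an by simp
    subgoal using flip_Ext_low[OF an] fa by simp
    subgoal using W R PF WU' a1 by (simp only: VU VU' evs, linarith?)
    subgoal premises p for i
    proof -
      have isub: "flip i U \<subseteq> {1..nn k}" using flip_sub[OF p(1) Usub] .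
      have i1: "1 \<le> int i" using p(1) by simp
      note Vi = gSuc_Ext[OF isub]
      show ?thesis
      proof (cases "i \<in> U")
        case True
        have "WW k (flip i U) = WW k U - (2 * MM k + int i + 2)" using WW_flip[OF p(1) Usub] True by simp
        moreover have "4 * gk k (flip i U) + int i < 4 * gk k (U - {a}) + int a"
          using True ord[OF True p(2)] by (simp add: flip_def)
        ultimately show ?thesis using W R PF WU' a1 i1
          by (simp only: Vi VU' evs, linarith?)
      next
        case False
        have "WW k (flip i U) = WW k U + (2 * MM k + int i + 2)" using WW_flip[OF p(1) Usub] False by simp
        then show ?thesis using range_MM[OF isub U'sub] W R PF WU' a1 i1
          by (simp only: Vi VU' evs, linarith?)
      qed
    qed
    using W R PF WU' a1 by (simp only: VU VU' evs, linarith?)+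
  show ?case using run_cons[OF mv Cons.IH[OF rest U'sub]] .
qed

lemma phaseA: "run (nn k) (gk k) {} js T \<Longrightarrow>
  run (nn k + 4) (gk (Suc k)) ({} \<union> Ext (nn k) False False False False) js (T \<union> Ext (nn k) False False False False)"
  apply (erule run_lift[where c=4 and d=0])
  subgoal by simp
  subgoal by simp
  subgoal by (rule Ext_disj)
  subgoal for U by (simp only: gSuc_Ext evs, simp?)
  subgoal by simp
  subgoal premises p for U j
  proof -
    note V = gSuc_Ext[OF p(1)]
    note W = WB[OF p(1)]
    from range4'[OF p(2)] consider "j = nn k + 1" | "j = nn k + 2" | "j = nn k + 3" | "j = nn k + 4" by blast
    then show ?thesis
    proof cases
      case 1 then show ?thesis using W PF by (simp only: flip_Ext1[OF p(1)] V evs, linarith?)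
    next
      case 2 then show ?thesis using W PF by (simp only: flip_Ext2[OF p(1)] V evs, linarith?)
    next
      case 3 then show ?thesis using W PF by (simp only: flip_Ext3[OF p(1)] V evs, linarith?)
    next
      case 4 then show ?thesis using W PF by (simp only: flip_Ext4[OF p(1)] V evs, linarith?)
    qed
  qed
  done

lemma phaseE: "run (nn k) (gk k) {} js T \<Longrightarrow>
  run (nn k + 4) (gk (Suc k)) ({} \<union> Ext (nn k) True False True True) js (T \<union> Ext (nn k) True False True True)"
  apply (erule run_lift[where c=4 and d="5 + MM k + 5 * (MM k * int (nn k))"])
  subgoal by simp
  subgoal by simp
  subgoal by (rule Ext_disj)
  subgoal for U by (simp only: gSuc_Ext evs, simp?)
  subgoal by simp
  subgoal premises p for U j
  proof -
    note V = gSuc_Ext[OF p(1)]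
    note W = WB[OF p(1)]
    from range4'[OF p(2)] consider "j = nn k + 1" | "j = nn k + 2" | "j = nn k + 3" | "j = nn k + 4" by blast
    then show ?thesis
    proof cases
      case 1 then show ?thesis using W PF by (simp only: flip_Ext1[OF p(1)] V evs, linarith?)
    next
      case 2 then show ?thesis using W PF by (simp only: flip_Ext2[OF p(1)] V evs, linarith?)
    next
      case 3 then show ?thesis using W PF by (simp only: flip_Ext3[OF p(1)] V evs, linarith?)
    next
      case 4 then show ?thesis using W PF by (simp only: flip_Ext4[OF p(1)] V evs, linarith?)
    qed
  qed
  done

lemma clr_lift: "clr (gk k) B U cl {} \<Longrightarrow> U \<subseteq> {1..nn k} \<Longrightarrow>
  clr (gk (Suc k)) (5 * (MM k * int (nn k))) (U \<union> Ext (nn k) True False True True) cl ({} \<union> Ext (nn k) True False True True)"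
proof (induction cl arbitrary: U)
  case Nil then show ?case by simp
next
  case (Cons a as)
  note Usub = Cons.prems(2)
  have aU: "a \<in> U" and ord: "\<And>j. j \<in> U \<Longrightarrow> j \<noteq> a \<Longrightarrow> gk k (U - {j}) \<le> gk k (U - {a}) \<and> 4 * gk k (U - {j}) + int j < 4 * gk k (U - {a}) + int a"
    and bd: "gk k U - B \<le> gk k (U - {a})"
    and rest: "clr (gk k) B (U - {a}) as {}" using Cons.prems(1) by auto
  have an: "a \<in> {1..nn k}" using aU Usub by auto
  have U'sub: "U - {a} \<subseteq> {1..nn k}" using Usub by auto
  have a1: "1 \<le> int a" using an by simp
  have an': "int a \<le> int (nn k)" using an by simp
  note VU = gSuc_Ext[OF Usub] and VU' = gSuc_Ext[OF U'sub]
  have eqa: "(U \<union> Ext (nn k) True False True True) - {a} = (U - {a}) \<union> Ext (nn k) True False True True"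
    by (rule minus_Ext_low[OF an])
  show ?case
  proof (rule clr_cons_intro)
    show "a \<in> U \<union> Ext (nn k) True False True True" using aU by simp
    show "gk (Suc k) (U \<union> Ext (nn k) True False True True) - 5 * (MM k * int (nn k))
        \<le> gk (Suc k) (U \<union> Ext (nn k) True False True True - {a})"
      unfolding eqa using bd PF MB by ((simp only: VU VU' evs ring_distribs of_nat_numeral), ((elim conjE)?, ((intro conjI)?; linarith))?)
    show "clr (gk (Suc k)) (5 * (MM k * int (nn k))) (U \<union> Ext (nn k) True False True True - {a}) as
      ({} \<union> Ext (nn k) True False True True)" unfolding eqa by (rule Cons.IH[OF rest U'sub])
  next
    fix j assume j: "j \<in> U \<union> Ext (nn k) True False True True" "j \<noteq> a"
    then consider "j \<in> U" | "j = nn k + 1" | "j = nn k + 3" | "j = nn k + 4" by (auto simp: Ext_def)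
    then show "gk (Suc k) (U \<union> Ext (nn k) True False True True - {j}) \<le> gk (Suc k) (U \<union> Ext (nn k) True False True True - {a}) \<and>
         4 * gk (Suc k) (U \<union> Ext (nn k) True False True True - {j}) + int j
         < 4 * gk (Suc k) (U \<union> Ext (nn k) True False True True - {a}) + int a"
    proof cases
      case 1
      have jn: "j \<in> {1..nn k}" using 1 Usub by auto
      have jsub: "U - {j} \<subseteq> {1..nn k}" using Usub by auto
      show ?thesis unfolding eqa minus_Ext_low[OF jn] using ord[OF 1 j(2)]
        by ((simp only: VU' gSuc_Ext[OF jsub] evs ring_distribs of_nat_numeral), ((elim conjE)?, ((intro conjI)?; linarith))?)
    next
      case 2 then show ?thesis unfolding eqa using bd PF MB a1 an'
        by (simp only: minus_Ext(1)[OF Usub] VU VU' evs of_nat_add ring_distribs of_nat_numeral, ((elim conjE)?, ((intro conjI)?; linarith))?)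
    next
      case 3 then show ?thesis unfolding eqa using bd PF MB a1 an'
        by (simp only: minus_Ext(2)[OF Usub] VU VU' evs of_nat_add ring_distribs of_nat_numeral, ((elim conjE)?, ((intro conjI)?; linarith))?)
    next
      case 4 then show ?thesis unfolding eqa using bd PF MB a1 an'
        by (simp only: minus_Ext(3)[OF Usub] VU VU' evs of_nat_add ring_distribs of_nat_numeral, ((elim conjE)?, ((intro conjI)?; linarith))?)
    qed
  qed
qed

lemma clrE: "clr (gk (Suc k)) (5 * (MM k * int (nn k))) ({} \<union> Ext (nn k) True False True True) [nn k + 1, nn k + 4, nn k + 3] {}"
proof -
  have e: "{} \<subseteq> {1..nn k}" by simp
  note V = gSuc_Ext[OF e]
  let ?F = "gk (Suc k)" and ?B = "5 * (MM k * int (nn k))"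
  have s1: "({} \<union> Ext (nn k) True False True True) - {nn k + 1} = {} \<union> Ext (nn k) False False True True"
    "({} \<union> Ext (nn k) True False True True) - {nn k + 3} = {} \<union> Ext (nn k) True False False True"
    "({} \<union> Ext (nn k) True False True True) - {nn k + 4} = {} \<union> Ext (nn k) True False True False"
    "({} \<union> Ext (nn k) False False True True) - {nn k + 4} = {} \<union> Ext (nn k) False False True False"
    "({} \<union> Ext (nn k) False False True True) - {nn k + 3} = {} \<union> Ext (nn k) False False False True"
    "({} \<union> Ext (nn k) False False True False) - {nn k + 3} = {} \<union> Ext (nn k) False False False False"
    by (auto simp: Ext_def)
  have c3: "clr ?F ?B ({} \<union> Ext (nn k) False False True False) [nn k + 3] {}"
    apply (rule clr_cons_intro)
    subgoal by (simp add: Ext_def)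
    subgoal using PF by ((simp only: s1 V WW0 evs ring_distribs of_nat_numeral), ((elim conjE)?, ((intro conjI)?; linarith))?)
    subgoal for j by (auto simp: Ext_def)
    subgoal by (simp only: s1 clr.simps) (simp add: Ext_def)
    done
  have c2: "clr ?F ?B ({} \<union> Ext (nn k) False False True True) [nn k + 4, nn k + 3] {}"
    apply (rule clr_cons_intro)
    subgoal by (simp add: Ext_def)
    subgoal using PF by ((simp only: s1 V WW0 evs ring_distribs of_nat_numeral), ((elim conjE)?, ((intro conjI)?; linarith))?)
    subgoal premises p for j
    proof -
      have "j = nn k + 3" using p by (auto simp: Ext_def)
      then show ?thesis using PF by ((simp only: s1 V WW0 evs of_nat_add ring_distribs of_nat_numeral), ((elim conjE)?, ((intro conjI)?; linarith))?)
    qed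
    subgoal using c3 by (simp only: s1)
    done
  show ?thesis
    apply (rule clr_cons_intro)
    subgoal by (simp add: Ext_def)
    subgoal using PF by ((simp only: s1 V WW0 evs ring_distribs of_nat_numeral), ((elim conjE)?, ((intro conjI)?; linarith))?)
    subgoal premises p for j
    proof -
      have "j = nn k + 3 \<or> j = nn k + 4" using p by (auto simp: Ext_def)
      then show ?thesis using PF by (elim disjE) ((simp only: s1 V WW0 evs of_nat_add ring_distribs of_nat_numeral), ((elim conjE)?, ((intro conjI)?; linarith))?)+
    qed
    subgoal using c2 by (simp only: s1)
    done
qed

lemma lm_next:
  assumes IH: "\<forall>S \<subseteq> {1..nn k}. local_max (nn k) (gk k) S \<longleftrightarrow> S = T"
  shows "\<forall>S \<subseteq> {1..nn k + 4}. local_max (nn k + 4) (gk (Suc k)) S \<longleftrightarrow> S = T \<union> Ext (nn k) True False True True"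
proof (intro allI impI)
  fix S assume Ssub: "S \<subseteq> {1..nn k + 4}"
  define U where "U = S \<inter> {1..nn k}"
  have Usub: "U \<subseteq> {1..nn k}" by (auto simp: U_def)
  have Sdec: "S = U \<union> Ext (nn k) (nn k + 1 \<in> S) (nn k + 2 \<in> S) (nn k + 3 \<in> S) (nn k + 4 \<in> S)"
  proof (rule set_eqI)
    fix x
    have "x \<in> S \<Longrightarrow> x \<in> {1..nn k} \<or> x = nn k+1 \<or> x = nn k+2 \<or> x = nn k+3 \<or> x = nn k+4"
      using range4 Ssub by blast
    then show "x \<in> S \<longleftrightarrow> x \<in> U \<union> Ext (nn k) (nn k + 1 \<in> S) (nn k + 2 \<in> S) (nn k + 3 \<in> S) (nn k + 4 \<in> S)"
      by (auto simp: U_def Ext_def)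
  qed
  note V = gSuc_Ext[OF Usub]
  note VT = gSuc_Ext[OF Tsub]
  have main: "local_max (nn k + 4) (gk (Suc k)) (U \<union> Ext (nn k) b1 b2 b3 b4) \<longleftrightarrow> U = T \<and> b1 \<and> \<not> b2 \<and> b3 \<and> b4" for b1 b2 b3 b4
  proof
    assume lm: "local_max (nn k + 4) (gk (Suc k)) (U \<union> Ext (nn k) b1 b2 b3 b4)"
    have g: "\<And>j. j \<in> {1..nn k+4} \<Longrightarrow> gk (Suc k) (flip j (U \<union> Ext (nn k) b1 b2 b3 b4)) \<le> gk (Suc k) (U \<union> Ext (nn k) b1 b2 b3 b4)"
      using lm by (simp add: local_max_iff)
    have i1: "gk (Suc k) (U \<union> Ext (nn k) (\<not>b1) b2 b3 b4) \<le> gk (Suc k) (U \<union> Ext (nn k) b1 b2 b3 b4)"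
      using g[of "nn k + 1", unfolded flip_Ext1[OF Usub]] by simp
    have i2: "gk (Suc k) (U \<union> Ext (nn k) b1 (\<not>b2) b3 b4) \<le> gk (Suc k) (U \<union> Ext (nn k) b1 b2 b3 b4)"
      using g[of "nn k + 2", unfolded flip_Ext2[OF Usub]] by simp
    have i3: "gk (Suc k) (U \<union> Ext (nn k) b1 b2 (\<not>b3) b4) \<le> gk (Suc k) (U \<union> Ext (nn k) b1 b2 b3 b4)"
      using g[of "nn k + 3", unfolded flip_Ext3[OF Usub]] by simp
    have i4: "gk (Suc k) (U \<union> Ext (nn k) b1 b2 b3 (\<not>b4)) \<le> gk (Suc k) (U \<union> Ext (nn k) b1 b2 b3 b4)"
      using g[of "nn k + 4", unfolded flip_Ext4[OF Usub]] by simp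
    have low: "\<And>j. j \<in> {1..nn k} \<Longrightarrow> gk (Suc k) (flip j U \<union> Ext (nn k) b1 b2 b3 b4) \<le> gk (Suc k) (U \<union> Ext (nn k) b1 b2 b3 b4)"
    proof -
      fix j assume j: "j \<in> {1..nn k}"
      then show "gk (Suc k) (flip j U \<union> Ext (nn k) b1 b2 b3 b4) \<le> gk (Suc k) (U \<union> Ext (nn k) b1 b2 b3 b4)"
        using g[of j, unfolded flip_Ext_low[OF j]] j by simp
    qed
    note W = WB[OF Usub]
    have nb2: "\<not> b2"
    proof
      assume b2: b2
      have Ue: "U = {}"
      proof (rule ccontr)
        assume "U \<noteq> {}"
        then obtain a where aU: "a \<in> U" by blast
        have an: "a \<in> {1..nn k}" using aU Usub by auto
        have fs: "flip a U \<subseteq> {1..nn k}" by (rule flip_sub[OF an Usub])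
        have Wf: "WW k (flip a U) = WW k U - (2 * MM k + int a + 2)" using WW_flip[OF an Usub] aU by simp
        have a1: "1 \<le> int a" using an by simp
        show False using low[OF an] range_MM[OF Usub fs] Wf a1 PF
          by ((simp only: V gSuc_Ext[OF fs] b2 evs ring_distribs), ((cases b1; cases b3; cases b4; simp only: evs; linarith))?)
      qed
      have "b3" using i3 PF b2 unfolding Ue
        by ((simp only: gSuc_Ext[OF empty_subsetI] WW0 evs ring_distribs), ((cases b1; cases b3; cases b4; simp only: evs; linarith?))?)
      moreover have "b4" using i4 PF b2 \<open>b3\<close> unfolding Ue
        by ((simp only: gSuc_Ext[OF empty_subsetI] WW0 evs ring_distribs), ((cases b1; cases b4; simp only: evs; linarith?))?)
      ultimately show False using i2 PF b2 unfolding Ue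
        by ((simp only: gSuc_Ext[OF empty_subsetI] WW0 evs ring_distribs), ((cases b1; simp only: evs; linarith?))?)
    qed
    have UT: "U = T"
    proof -
      have "local_max (nn k) (gk k) U"
        unfolding local_max_iff
      proof
        fix j assume j: "j \<in> {1..nn k}"
        show "gk k (flip j U) \<le> gk k U" using low[OF j] nb2
          by ((simp only: V gSuc_Ext[OF flip_sub[OF j Usub]] evs), ((cases b1; cases b3; cases b4; simp only: evs; linarith))?)
      qed
      then show ?thesis using IH Usub by blast
    qed
    have "b1" using i1 nb2 PF
      by ((simp only: V evs ring_distribs), ((cases b1; cases b3; cases b4; simp only: evs; linarith?))?)
    moreover have "b3" using i3 nb2 PF
      by ((simp only: V evs ring_distribs), ((cases b1; cases b3; cases b4; simp only: evs; linarith?))?)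
    moreover have "b4" using i4 nb2 PF \<open>b3\<close>
      by ((simp only: V evs ring_distribs), ((cases b1; cases b4; simp only: evs; linarith?))?)
    ultimately show "U = T \<and> b1 \<and> \<not> b2 \<and> b3 \<and> b4" using UT nb2 by simp
  next
    assume "U = T \<and> b1 \<and> \<not> b2 \<and> b3 \<and> b4"
    then have h: "U = T" "b1" "\<not> b2" "b3" "b4" by auto
    note W = WB[OF Tsub]
    show "local_max (nn k + 4) (gk (Suc k)) (U \<union> Ext (nn k) b1 b2 b3 b4)"
      unfolding local_max_iff
    proof
      fix j assume j: "j \<in> {1..nn k + 4}"
      then consider "j \<in> {1..nn k}" | "j = nn k + 1" | "j = nn k + 2" | "j = nn k + 3" | "j = nn k + 4" using range4 by blast
      then show "gk (Suc k) (flip j (U \<union> Ext (nn k) b1 b2 b3 b4)) \<le> gk (Suc k) (U \<union> Ext (nn k) b1 b2 b3 b4)"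
      proof cases
        case 1 then show ?thesis using Tl[OF 1] h
          by (simp only: h(1) flip_Ext_low[OF 1] VT gSuc_Ext[OF lowT[OF 1]] evs, linarith?)
      next
        case 2 then show ?thesis using h W PF by (simp only: h(1) flip_Ext1[OF Tsub] VT evs, linarith?)
      next
        case 3 then show ?thesis using h W PF by (simp only: h(1) flip_Ext2[OF Tsub] VT evs, linarith?)
      next
        case 4 then show ?thesis using h W PF by (simp only: h(1) flip_Ext3[OF Tsub] VT evs, linarith?)
      next
        case 5 then show ?thesis using h W PF by (simp only: h(1) flip_Ext4[OF Tsub] VT evs, linarith?)
      qed
    qed
  qed
  have "T \<union> Ext (nn k) True False True True = U \<union> Ext (nn k) (nn k + 1 \<in> S) (nn k + 2 \<in> S) (nn k + 3 \<in> S) (nn k + 4 \<in> S)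
     \<longleftrightarrow> U = T \<and> (nn k + 1 \<in> S) \<and> \<not> (nn k + 2 \<in> S) \<and> (nn k + 3 \<in> S) \<and> (nn k + 4 \<in> S)"
  proof
    assume e: "T \<union> Ext (nn k) True False True True = U \<union> Ext (nn k) (nn k + 1 \<in> S) (nn k + 2 \<in> S) (nn k + 3 \<in> S) (nn k + 4 \<in> S)"
    have "U = (T \<union> Ext (nn k) True False True True) \<inter> {1..nn k}" using e Usub by (auto simp: Ext_def)
    also have "\<dots> = T" using Tsub by (auto simp: Ext_def)
    finally have "U = T" .
    show "U = T \<and> (nn k + 1 \<in> S) \<and> \<not> (nn k + 2 \<in> S) \<and> (nn k + 3 \<in> S) \<and> (nn k + 4 \<in> S)"
    proof -
      have "nn k + 2 \<notin> T" using Tsub by auto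
      then show ?thesis using e Sdec \<open>U = T\<close> by (auto simp: Ext_def)
    qed
  qed (auto simp: Ext_def)
  then show "local_max (nn k + 4) (gk (Suc k)) S = (S = T \<union> Ext (nn k) True False True True)"
    using main Sdec by metis
qed

lemma step_run: "run (nn k) (gk k) {} js T \<Longrightarrow> clr (gk k) B T cl {} \<Longrightarrow>
  run (nn k + 4) (gk (Suc k)) {} (js @ [nn k + 1, nn k + 2] @ cl @ [nn k + 3, nn k + 4, nn k + 2] @ js)
     (T \<union> Ext (nn k) True False True True)"
proof -
  assume r: "run (nn k) (gk k) {} js T" and c: "clr (gk k) B T cl {}"
  have A: "run (nn k + 4) (gk (Suc k)) {} js (T \<union> Ext (nn k) False False False False)"
    using phaseA[OF r] by (simp add: Ext_empty)
  show ?thesis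
    unfolding run_append
    using A phaseB phaseC[OF c Tsub] phaseD phaseE[OF r] by blast
qed

lemma step_M: "run (nn k) (gk k) {} js T \<Longrightarrow>
   4 * (5 * (MM k * int (nn k))) + 2 * int (nn (Suc k)) \<le> MM (Suc k)"
proof -
  assume r: "run (nn k) (gk k) {} js T"
  have mono: "gk k {} \<le> gk k T" using run_mono[OF r] .
  have e: "{} \<subseteq> {1..nn k}" by simp
  have s1: "T \<union> Ext (nn k) True False True True \<subseteq> {1..nn (Suc k)}" using Tsub by (auto simp: Ext_def nn_Suc)
  have s2: "{} \<union> Ext (nn k) False False False False \<subseteq> {1..nn (Suc k)}" by (simp add: Ext_empty)
  have "4 * gk (Suc k) (T \<union> Ext (nn k) True False True True) - 4 * gk (Suc k) ({} \<union> Ext (nn k) False False False False) \<le> MM (Suc k)"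
    by (rule range_MM[OF s1 s2])
  moreover have "4 * (4 * gk k T) = 16 * gk k T" "4 * (4 * gk k {}) = 16 * gk k {}"
    "4 * (5 * (MM k * int (nn k))) = 20 * (MM k * int (nn k))" by simp_all
  ultimately show ?thesis using mono PF M_ge
    by ((simp only: gSuc_Ext[OF Tsub] gSuc_Ext[OF e] WW0 evs ring_distribs nn_Suc of_nat_add of_nat_numeral), linarith?)
qed

end

fun BB :: "nat \<Rightarrow> int" where
  "BB 0 = 2"
| "BB (Suc k) = 5 * (MM k * int (nn k))"

definition Inv :: "nat \<Rightarrow> bool" where
  "Inv k \<longleftrightarrow> (\<exists>js. run (nn k) (gk k) {} js (Tset k) \<and> 2^(k+1) \<le> length js) \<and>
     (\<forall>S \<subseteq> {1..nn k}. local_max (nn k) (gk k) S \<longleftrightarrow> S = Tset k) \<and>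
     (\<exists>cl. clr (gk k) (BB k) (Tset k) cl {}) \<and> 4 * BB k + 2 * int (nn k) \<le> MM k \<and> 2 \<le> BB k
     \<and> Tset k \<subseteq> {1..nn k}"

lemma Tset_Suc: "Tset (Suc k) = Tset k \<union> Ext (nn k) True False True True"
proof (rule set_eqI)
  fix x :: nat
  show "x \<in> Tset (Suc k) \<longleftrightarrow> x \<in> Tset k \<union> Ext (nn k) True False True True"
    by (simp add: Tset_def nn_def Ext_def) presburger
qed

lemma Inv_Suc: "Inv k \<Longrightarrow> Inv (Suc k)"
proof -
  assume I: "Inv k"
  then obtain js cl where r: "run (nn k) (gk k) {} js (Tset k)" and len: "2^(k+1) \<le> length js"
    and ch: "\<forall>S \<subseteq> {1..nn k}. local_max (nn k) (gk k) S \<longleftrightarrow> S = Tset k"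
    and c: "clr (gk k) (BB k) (Tset k) cl {}" and MB: "4 * BB k + 2 * int (nn k) \<le> MM k" and B2: "2 \<le> BB k"
    and Ts: "Tset k \<subseteq> {1..nn k}"
    unfolding Inv_def by blast
  interpret L: lvl k "BB k" "Tset k"
    by unfold_locales (use MB B2 Ts ch in auto)
  have n4: "nn (Suc k) = nn k + 4" by (rule nn_Suc)
  show "Inv (Suc k)"
    unfolding Inv_def n4 Tset_Suc
  proof (intro conjI)
    show "\<exists>js. run (nn k + 4) (gk (Suc k)) {} js (Tset k \<union> Ext (nn k) True False True True) \<and> 2 ^ (Suc k + 1) \<le> length js"
      using L.step_run[OF r c] len by (intro exI[of _ "js @ [nn k + 1, nn k + 2] @ cl @ [nn k + 3, nn k + 4, nn k + 2] @ js"]) auto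
    show "\<forall>S\<subseteq>{1..nn k + 4}. local_max (nn k + 4) (gk (Suc k)) S = (S = Tset k \<union> Ext (nn k) True False True True)"
      using L.lm_next[OF ch] .
    show "\<exists>cl. clr (gk (Suc k)) (BB (Suc k)) (Tset k \<union> Ext (nn k) True False True True) cl {}"
      using L.clr_lift[OF c Ts] L.clrE
      by (intro exI[of _ "cl @ [nn k + 1, nn k + 4, nn k + 3]"]) (auto simp: clr_append)
    show "4 * BB (Suc k) + 2 * int (nn k + 4) \<le> MM (Suc k)" using L.step_M[OF r] by (simp add: n4)
    show "2 \<le> BB (Suc k)" unfolding BB.simps using L.PF by linarith
    show "Tset k \<union> Ext (nn k) True False True True \<subseteq> {1..nn k + 4}" using Ts by (auto simp: Ext_def)
  qed
qed

lemma g0: "gk 0 S = 2 * xv S 1 + xv S 2" by (simp add: gk.simps)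

lemma Inv_0: "Inv 0"
proof -
  have n0: "nn 0 = 2" by (simp add: nn_def)
  have r2: "{1..2::nat} = {1,2}" by auto
  have T0: "Tset 0 = {1,2}" by (auto simp: Tset_def nn_def)
  have f: "flip 1 {} = {1}" "flip 2 {} = {2}" "flip 1 {1::nat} = {}" "flip 2 {1::nat} = {1,2}"
    "flip 1 {2::nat} = {1,2}" "flip 2 {2::nat} = {}" "flip 1 {1,2::nat} = {2}" "flip 2 {1,2::nat} = {1}"
    by (auto simp: flip_def)
  have v: "gk 0 {} = 0" "gk 0 {1} = 2" "gk 0 {2} = 1" "gk 0 {1,2} = 3" by (simp_all add: g0 xv_def)
  have run0: "run 2 (gk 0) {} [1,2] {1,2}"
    unfolding run.simps r2 by (simp only: ball_simps f v, simp)
  have sub: "S \<subseteq> {1,2} \<Longrightarrow> S = {} \<or> S = {1} \<or> S = {2} \<or> S = {1,2::nat}" for S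
    by (cases "1 \<in> S"; cases "2 \<in> S") auto
  have ch: "\<forall>S \<subseteq> {1..2}. local_max 2 (gk 0) S \<longleftrightarrow> S = {1,2}"
  proof (intro allI impI)
    fix S :: "nat set" assume "S \<subseteq> {1..2}"
    then have "S = {} \<or> S = {1} \<or> S = {2} \<or> S = {1,2}" using sub r2 by simp
    then show "local_max 2 (gk 0) S \<longleftrightarrow> S = {1,2}"
      unfolding local_max_iff r2
      by (elim disjE) (simp only: ball_simps f v, simp)+
  qed
  have d: "{1,2::nat} - {2} = {1}" "{1,2::nat} - {1} = {2}" "{1::nat} - {1} = {}" by auto
  have c0: "clr (gk 0) 2 {1,2} [2,1] {}"
    unfolding clr.simps d by (simp only: ball_simps v d, simp)
  have M0: "12 \<le> MM 0"
  proof -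
    have "4 * gk 0 {1,2} - 4 * gk 0 {} \<le> MM 0" by (rule range_MM) (simp_all add: n0)
    then show ?thesis by (simp add: g0 xv_def)
  qed
  have B0: "BB 0 = 2" by simp
  show ?thesis unfolding Inv_def n0 T0 B0
  proof (intro conjI)
    show "\<exists>js. run 2 (gk 0) {} js {1, 2} \<and> 2 ^ (0 + 1) \<le> length js"
      by (intro exI[of _ "[1,2]"] conjI run0) simp
    show "\<exists>cl. clr (gk 0) 2 {1, 2} cl {}" by (intro exI[of _ "[2,1]"] c0)
    show "4 * 2 + 2 * int 2 \<le> MM 0" using M0 by simp
  qed (use ch in auto)
qed


lemma Inv_all: "Inv k"
  by (induction k) (auto intro: Inv_0 Inv_Suc)

theorem theorem2:
  fixes n :: nat
  assumes "n mod 4 = 2"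
  defines "target \<equiv> {1..n} - {i. 4 \<le> i \<and> i \<le> n - 2 \<and> 4 dvd i}"
  shows "\<exists>ps. greedy_path_no_ties n (g n) ps \<and> hd ps = {} \<and> last ps = target
           \<and> (\<forall>S \<in> Pow {1..n}. local_max n (g n) S \<longleftrightarrow> S = target)
           \<and> real (length ps - 1) > 2 powr (real n / 4)"
proof -
  define k where "k = (n - 2) div 4"
  have nk: "n = nn k" using assms(1) unfolding k_def nn_def by presburger
  have gn: "g n = gk k" unfolding g_def k_def ..
  have tg: "target = Tset k" unfolding target_def Tset_def nk ..
  obtain js where r: "run (nn k) (gk k) {} js (Tset k)" and len: "2^(k+1) \<le> length js"
    and ch: "\<forall>S \<subseteq> {1..nn k}. local_max (nn k) (gk k) S \<longleftrightarrow> S = Tset k"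
    and Ts: "Tset k \<subseteq> {1..nn k}"
    using Inv_all[of k] unfolding Inv_def by blast
  have lm: "local_max (nn k) (gk k) (Tset k)" using ch Ts by blast
  obtain ps where ps: "greedy_path_no_ties (nn k) (gk k) ps" "hd ps = {}" "last ps = Tset k"
    "length ps = Suc (length js)" using run_to_path[OF r lm] by blast
  have "2 powr (real n / 4) < 2 powr (real (k+1))"
    by (intro powr_less_mono) (auto simp: nk nn_def)
  also have "\<dots> = 2 ^ (k+1)" by (rule powr_realpow) simp
  also have "\<dots> \<le> real (length js)" using len by (metis of_nat_le_iff of_nat_numeral of_nat_power)
  finally have "2 powr (real n / 4) < real (length ps - 1)" using ps(4) by simp
  moreover have "greedy_path_no_ties n (gk k) ps" using ps(1) nk by simp
  moreover have "\<forall>S \<in> Pow {1..n}. local_max n (gk k) S \<longleftrightarrow> S = Tset k" using ch nk by auto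
  ultimately show ?thesis unfolding gn tg using ps(2,3) by blast
qed

end
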